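(* There exist absolute constants $\varepsilon_0>0$ and $n_0$ such that for the population protocol USD with $n\ge n_0$ and every $t\ge1$: if $\beta_{t-1}\ge\frac12-\varepsilon_0$ and $\gamma_{t-1}\le\varepsilon_0$, then $$\mathbb E_{t-1}[\widetilde\gamma_t]\ge\widetilde\gamma_{t-1}+\frac{1}{12n^2}.$$
   Context: Vertex set $V$, $|V|=n$; opinions in $\Sigma=[k]\cup\{\bot\}$ ($\bot$ = undecided). USD update rule: $\mathsf{update}(\sigma_1,\sigma_2)=\bot$ if $\sigma_1,\sigma_2\in[k]$ and $\sigma_1\ne\sigma_2$; $=\sigma_2$ if $\sigma_1=\bot$; $=\sigma_1$ otherwise. Population protocol USD: given $\mathrm{opn}_t\in\Sigma^V$, an ordered pair $(u,v)$ is chosen uniformly from $V\times V$ (with replacement), $\mathrm{opn}_{t+1}(u)=\mathsf{update}(\mathrm{opn}_t(u),\mathrm{opn}_t(v))$, and all other vertices keep their opinions. Notation: $\alpha_t(i)=|\{u:\mathrm{opn}_t(u)=i\}|/n$, $\beta_t=\sum_{i\in[k]}\alpha_t(i)$, $\gamma_t=\sum_{i\in[k]}\alpha_t(i)^2$, $\widetilde\gamma_t=\gamma_t/\beta_t^2$ if $\beta_t>0$ and $\widetilde\gamma_t=0$ if $\beta_t=0$. $\mathbb E_{t-1}$ is conditional expectation given the natural filtration $\mathcal F_{t-1}$. *)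

theory Defs
  imports "HOL-Probability.Probability"
begin

text \<open>Opinions: None = undecided, Some i = opinion i (i in {1..k}).
  Vertex set V = {..<n}. A configuration is a map opn :: nat => nat option
  (only its values on V matter).\<close>

definition usd_update :: "nat option \<Rightarrow> nat option \<Rightarrow> nat option" where
  "usd_update s1 s2 =
     (case (s1, s2) of
        (Some a, Some b) \<Rightarrow> (if a \<noteq> b then None else Some a)
      | (None, _) \<Rightarrow> s2
      | (Some a, None) \<Rightarrow> Some a)"

definition usd_step :: "(nat \<Rightarrow> nat option) \<Rightarrow> nat \<times> nat \<Rightarrow> (nat \<Rightarrow> nat option)" where
  "usd_step opn uv = opn(fst uv := usd_update (opn (fst uv)) (opn (snd uv)))"

definition valid_config :: "nat \<Rightarrow> nat \<Rightarrow> (nat \<Rightarrow> nat option) \<Rightarrow> bool" where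
  "valid_config n k opn \<longleftrightarrow> (\<forall>u<n. opn u = None \<or> (\<exists>i\<in>{1..k}. opn u = Some i))"

definition usd_alpha :: "nat \<Rightarrow> (nat \<Rightarrow> nat option) \<Rightarrow> nat \<Rightarrow> real" where
  "usd_alpha n opn i = real (card {u\<in>{..<n}. opn u = Some i}) / real n"

definition usd_beta :: "nat \<Rightarrow> nat \<Rightarrow> (nat \<Rightarrow> nat option) \<Rightarrow> real" where
  "usd_beta n k opn = (\<Sum>i\<in>{1..k}. usd_alpha n opn i)"

definition usd_gamma :: "nat \<Rightarrow> nat \<Rightarrow> (nat \<Rightarrow> nat option) \<Rightarrow> real" where
  "usd_gamma n k opn = (\<Sum>i\<in>{1..k}. (usd_alpha n opn i)\<^sup>2)"

definition usd_gamma_tilde :: "nat \<Rightarrow> nat \<Rightarrow> (nat \<Rightarrow> nat option) \<Rightarrow> real" where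
  "usd_gamma_tilde n k opn =
     (if usd_beta n k opn > 0 then usd_gamma n k opn / (usd_beta n k opn)\<^sup>2 else 0)"

definition usd_next :: "nat \<Rightarrow> (nat \<Rightarrow> nat option) \<Rightarrow> (nat \<Rightarrow> nat option) pmf" where
  "usd_next n opn = map_pmf (usd_step opn) (pmf_of_set ({..<n} \<times> {..<n}))"

end

theory Submission
  imports Defs
begin

definition cnt :: "nat \<Rightarrow> (nat \<Rightarrow> nat option) \<Rightarrow> nat \<Rightarrow> real" where
  "cnt n opn i = real (card {u\<in>{..<n}. opn u = Some i})"

definition GT :: "nat \<Rightarrow> (nat \<Rightarrow> real) \<Rightarrow> real" where
  "GT k c = (if (\<Sum>i\<in>{1..k}. c i) > 0 then (\<Sum>i\<in>{1..k}. (c i)^2) / (\<Sum>i\<in>{1..k}. c i)^2 else 0)"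

lemma gt_eq:
  assumes "n > 0"
  shows "usd_gamma_tilde n k opn = GT k (cnt n opn)"
proof -
  have a: "usd_alpha n opn i = cnt n opn i / n" for i
    by (simp add: usd_alpha_def cnt_def)
  have b: "usd_beta n k opn = (\<Sum>i\<in>{1..k}. cnt n opn i) / n"
    by (simp add: usd_beta_def a sum_divide_distrib)
  have g: "usd_gamma n k opn = (\<Sum>i\<in>{1..k}. (cnt n opn i)^2) / n^2"
    by (simp add: usd_gamma_def a sum_divide_distrib power_divide)
  have "(usd_beta n k opn > 0) = ((\<Sum>i\<in>{1..k}. cnt n opn i) > 0)"
    using assms by (simp add: b zero_less_divide_iff)
  then show ?thesis using assms
    by (simp add: usd_gamma_tilde_def GT_def b g power_divide)
qed

lemma cnt_upd:
  assumes "u < n"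
  shows "cnt n (opn(u:=x)) i = cnt n opn i - (if opn u = Some i then 1 else 0) + (if x = Some i then 1 else 0)"
proof -
  define A where "A = {w\<in>{..<n}. w \<noteq> u \<and> opn w = Some i}"
  have fA: "finite A" "u \<notin> A" by (auto simp: A_def)
  have e1: "{w\<in>{..<n}. (opn(u:=x)) w = Some i} = (if x = Some i then insert u A else A)"
    using assms by (auto simp: A_def)
  have e2: "{w\<in>{..<n}. opn w = Some i} = (if opn u = Some i then insert u A else A)"
    using assms by (auto simp: A_def)
  show ?thesis unfolding cnt_def e1 e2 using fA by auto
qed

lemma group_sum:
  fixes \<phi> :: "nat option \<Rightarrow> real"
  assumes "valid_config n k opn"
  shows "(\<Sum>u<n. \<phi> (opn u)) = real (card {u\<in>{..<n}. opn u = None}) * \<phi> None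
           + (\<Sum>i\<in>{1..k}. cnt n opn i * \<phi> (Some i))"
proof -
  have sub: "opn ` {..<n} \<subseteq> insert None (Some ` {1..k})"
    using assms by (auto simp: valid_config_def)
  have "(\<Sum>u<n. \<phi> (opn u)) = (\<Sum>y\<in>insert None (Some ` {1..k}). \<Sum>u\<in>{x. x \<in> {..<n} \<and> opn x = y}. \<phi> (opn u))"
    by (rule sum.group[symmetric]) (use sub in auto)
  also have "\<dots> = (\<Sum>y\<in>insert None (Some ` {1..k}). real (card {x. x \<in> {..<n} \<and> opn x = y}) * \<phi> y)"
    by (rule sum.cong) auto
  also have "\<dots> = real (card {u\<in>{..<n}. opn u = None}) * \<phi> None
           + (\<Sum>y\<in>Some ` {1..k}. real (card {x. x \<in> {..<n} \<and> opn x = y}) * \<phi> y)"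
    by (subst sum.insert) auto
  also have "(\<Sum>y\<in>Some ` {1..k}. real (card {x. x \<in> {..<n} \<and> opn x = y}) * \<phi> y)
      = (\<Sum>i\<in>{1..k}. cnt n opn i * \<phi> (Some i))"
    by (subst sum.reindex) (auto simp: cnt_def)
  finally show ?thesis .
qed

lemma cs_ineq:
  fixes c :: "nat \<Rightarrow> real" and K :: "nat set"
  assumes "finite K" "\<And>i. i \<in> K \<Longrightarrow> c i \<ge> 0"
  shows "(\<Sum>i\<in>K. (c i)^2)^2 \<le> (\<Sum>i\<in>K. c i) * (\<Sum>i\<in>K. (c i)^3)"
proof -
  have "0 \<le> (\<Sum>i\<in>K. \<Sum>j\<in>K. c i * c j * (c i - c j)^2)"
    using assms by (intro sum_nonneg) auto
  also have "\<dots> = (\<Sum>i\<in>K. \<Sum>j\<in>K. (c i)^3 * c j + c i * (c j)^3 - 2 * ((c i)^2 * (c j)^2))"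
    by (intro sum.cong refl) (simp add: power2_eq_square power3_eq_cube algebra_simps)
  also have "\<dots> = (\<Sum>i\<in>K. \<Sum>j\<in>K. (c i)^3 * c j) + (\<Sum>i\<in>K. \<Sum>j\<in>K. c i * (c j)^3)
      - 2 * (\<Sum>i\<in>K. \<Sum>j\<in>K. (c i)^2 * (c j)^2)"
    by (simp only: sum.distrib sum_subtractf sum_distrib_left)
  also have "\<dots> = 2 * ((\<Sum>i\<in>K. c i) * (\<Sum>i\<in>K. (c i)^3) - (\<Sum>i\<in>K. (c i)^2)^2)"
    by (simp only: sum_product[symmetric] power2_eq_square[of "sum _ _"]) (simp add: algebra_simps)
  finally show ?thesis by simp
qed


lemma final_ineq:
  fixes n B S T N g0 P X :: real
  assumes "N = n - B" "B \<ge> 2" "B \<le> n" "0 \<le> S" "2 * S \<le> B^2" "S^2 \<le> B * T"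
    and g0: "g0 = S / B^2" and P: "P = (B*S + 2*S + B) / (B+1)^2"
    and X: "X = (B^2 - S)*(S+1) - 2*B*S + 2*T"
  shows "N*(N*g0 + P) + (N*B*g0 + S*g0 + X/(B-1)^2) \<ge> n^2 * g0 + 1/4"
proof -
  have B0: "B > 0" "B - 1 > 0" "B + 1 > 0" using assms by auto
  have d: "N*(N*g0 + P) + (N*B*g0 + S*g0 + X/(B-1)^2) - n^2 * g0
       = N*(P - S/B) + (X/(B-1)^2 - (B^2-S)*S/B^2)"
  proof -
    define Z where "Z = X/(B-1)^2"
    have "n = N + B" using assms(1) by simp
    then have 1: "N*(N*g0 + P) + (N*B*g0 + S*g0 + Z) - n^2 * g0 = N*P + (S - N*B - B^2)*g0 + Z"
      by (simp add: power2_eq_square algebra_simps)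
    have 2: "(S - N*B - B^2)*g0 = - N*(S/B) - (B^2-S)*S/B^2"
      using B0 unfolding g0 by (simp add: field_simps power2_eq_square)
    show ?thesis using 1 2 unfolding Z_def by (simp add: algebra_simps)
  qed
  have h1: "P - S/B = (B^2-S)/(B*(B+1)^2)"
    using B0 unfolding P by (simp add: field_simps) (simp add: power2_eq_square algebra_simps)
  have h1': "N*(P - S/B) \<ge> 0"
    unfolding h1 using assms B0 by (intro mult_nonneg_nonneg divide_nonneg_pos) auto
  define Y where "Y = B^4 - 2*B^2*S - 2*B*S^2 + S^2 + 2*B^2*T"
  have h2: "X/(B-1)^2 - (B^2-S)*S/B^2 = Y/(B^2*(B-1)^2)"
    using B0 unfolding X Y_def by (simp add: field_simps) (simp add: power2_eq_square power4_eq_xxxx algebra_simps)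
  have "2*B*S^2 \<le> 2*B^2*T"
    using assms(6) B0 by (simp add: power2_eq_square)
  then have "Y \<ge> (B^2 - S)^2" unfolding Y_def by (simp add: power2_eq_square power4_eq_xxxx algebra_simps)
  moreover have "B^2 - S \<ge> B^2/2" using assms by simp
  then have "(B^2 - S)^2 \<ge> (B^2/2)^2"
    using assms by (intro power_mono) auto
  ultimately have Yg: "Y \<ge> B^4/4" by (simp add: power2_eq_square power4_eq_xxxx)
  have den: "0 < B^2*(B-1)^2" "B^2*(B-1)^2 \<le> B^4"
    using B0 by (auto simp: power2_eq_square power4_eq_xxxx intro!: mult_left_mono mult_mono)
  have "1/4 = (B^4/4) / B^4" using B0 by simp
  also have "\<dots> \<le> (B^4/4) / (B^2*(B-1)^2)"
    using den B0 by (intro divide_left_mono) auto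
  also have "\<dots> \<le> Y/(B^2*(B-1)^2)"
    using den Yg by (intro divide_right_mono) auto
  finally show ?thesis using d h1' h2 by linarith
qed


lemma GT_plus:
  fixes c :: "nat \<Rightarrow> real"
  assumes "j \<in> {1..k}" "(\<Sum>i\<in>{1..k}. c i) \<ge> 0"
  shows "GT k (\<lambda>i. c i + (if j = i then 1 else 0))
     = ((\<Sum>i\<in>{1..k}. (c i)^2) + 2 * c j + 1) / ((\<Sum>i\<in>{1..k}. c i) + 1)^2"
proof -
  have s1: "(\<Sum>i\<in>{1..k}. c i + (if j = i then 1 else 0)) = (\<Sum>i\<in>{1..k}. c i) + 1"
    using assms by (simp add: sum.distrib)
  have "(\<Sum>i\<in>{1..k}. (c i + (if j = i then 1 else 0))^2)
      = (\<Sum>i\<in>{1..k}. (c i)^2 + (if j = i then 2 * c i + 1 else 0))"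
    by (intro sum.cong refl) (auto simp: power2_eq_square algebra_simps)
  also have "\<dots> = (\<Sum>i\<in>{1..k}. (c i)^2) + 2 * c j + 1"
    using assms by (simp add: sum.distrib)
  finally show ?thesis using assms unfolding GT_def s1 by simp
qed

lemma GT_minus:
  fixes c :: "nat \<Rightarrow> real"
  assumes "j \<in> {1..k}" "(\<Sum>i\<in>{1..k}. c i) > 1"
  shows "GT k (\<lambda>i. c i - (if j = i then 1 else 0))
     = ((\<Sum>i\<in>{1..k}. (c i)^2) - 2 * c j + 1) / ((\<Sum>i\<in>{1..k}. c i) - 1)^2"
proof -
  have s1: "(\<Sum>i\<in>{1..k}. c i - (if j = i then 1 else 0)) = (\<Sum>i\<in>{1..k}. c i) - 1"
    using assms by (simp add: sum_subtractf)
  have "(\<Sum>i\<in>{1..k}. (c i - (if j = i then 1 else 0))^2)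
      = (\<Sum>i\<in>{1..k}. (c i)^2 + (if j = i then 1 - 2 * c i else 0))"
    by (intro sum.cong refl) (auto simp: power2_eq_square algebra_simps)
  also have "\<dots> = (\<Sum>i\<in>{1..k}. (c i)^2) - 2 * c j + 1"
    using assms by (simp add: sum.distrib)
  finally show ?thesis using assms unfolding GT_def s1 by simp
qed


lemma beta_eq: "n > 0 \<Longrightarrow> usd_beta n k opn = (\<Sum>i\<in>{1..k}. cnt n opn i) / n"
  by (simp add: usd_beta_def usd_alpha_def cnt_def sum_divide_distrib)

lemma gamma_eq: "n > 0 \<Longrightarrow> usd_gamma n k opn = (\<Sum>i\<in>{1..k}. (cnt n opn i)^2) / (real n)^2"
  by (simp add: usd_gamma_def usd_alpha_def cnt_def sum_divide_distrib power_divide)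

lemma expect_eq:
  assumes "n > 0"
  shows "measure_pmf.expectation (usd_next n opn) (usd_gamma_tilde n k)
    = (\<Sum>u<n. \<Sum>v<n. GT k (\<lambda>i. cnt n opn i - (if opn u = Some i then 1 else 0)
            + (if usd_update (opn u) (opn v) = Some i then 1 else 0))) / (real n)^2"
proof -
  have ne: "{..<n} \<times> {..<n} \<noteq> {}" using assms by auto
  have "measure_pmf.expectation (usd_next n opn) (usd_gamma_tilde n k)
      = (\<Sum>p\<in>{..<n} \<times> {..<n}. usd_gamma_tilde n k (usd_step opn p)) / real (card ({..<n} \<times> {..<n}))"
    unfolding usd_next_def using ne by (simp add: integral_pmf_of_set)
  also have "(\<Sum>p\<in>{..<n} \<times> {..<n}. usd_gamma_tilde n k (usd_step opn p))
     = (\<Sum>u<n. \<Sum>v<n. usd_gamma_tilde n k (usd_step opn (u,v)))"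
    by (simp add: sum.cartesian_product)
  also have "\<dots> = (\<Sum>u<n. \<Sum>v<n. GT k (\<lambda>i. cnt n opn i - (if opn u = Some i then 1 else 0)
            + (if usd_update (opn u) (opn v) = Some i then 1 else 0)))"
    apply (intro sum.cong refl)
    apply (simp add: gt_eq assms usd_step_def)
    apply (rule arg_cong[where f="GT k"])
    apply (rule ext)
    apply (simp add: cnt_upd)
    done
  finally show ?thesis by (simp add: power2_eq_square)
qed


theorem mainTheorem15:
  "\<exists>(\<epsilon>0::real) (n0::nat). \<epsilon>0 > 0 \<and>
     (\<forall>n k opn. n \<ge> n0 \<longrightarrow> valid_config n k opn \<longrightarrow>
        usd_beta n k opn \<ge> 1/2 - \<epsilon>0 \<longrightarrow> usd_gamma n k opn \<le> \<epsilon>0 \<longrightarrow>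
        measure_pmf.expectation (usd_next n opn) (usd_gamma_tilde n k)
          \<ge> usd_gamma_tilde n k opn + 1 / (12 * (real n)\<^sup>2))"
proof (intro exI conjI allI impI)
  show "(1/100::real) > 0" by simp
  fix n k opn
  assume n5: "5 \<le> n" and vc: "valid_config n k opn"
    and hb: "1/2 - 1/100 \<le> usd_beta n k opn" and hg: "usd_gamma n k opn \<le> 1/100"
  have n0: "n > 0" using n5 by simp
  define c where "c = cnt n opn"
  define B where "B = (\<Sum>i\<in>{1..k}. c i)"
  define S where "S = (\<Sum>i\<in>{1..k}. (c i)^2)"
  define T where "T = (\<Sum>i\<in>{1..k}. (c i)^3)"
  define N where "N = real (card {u\<in>{..<n}. opn u = None})"
  have c0: "c i \<ge> 0" for i by (simp add: c_def cnt_def)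
  have NB: "N + B = real n"
    using group_sum[OF vc, of "\<lambda>_. 1"] by (simp add: N_def B_def c_def)
  have N0: "N \<ge> 0" by (simp add: N_def)
  have Bn: "B / n \<ge> 49/100" using hb beta_eq[OF n0] by (simp add: B_def c_def)
  have Sn: "S / (real n)^2 \<le> 1/100" using hg gamma_eq[OF n0] by (simp add: S_def c_def)
  have Bge: "B \<ge> 49/100 * n" using Bn n0 by (simp add: field_simps)
  have B2: "B \<ge> 2" using Bge n5 by linarith
  have Sle: "S \<le> (real n)^2 / 100" using Sn n0 by (simp add: field_simps)
  have S0: "S \<ge> 0" unfolding S_def by (intro sum_nonneg) simp
  have "(49/100 * real n)^2 \<le> B^2" using Bge n0 by (intro power_mono) auto
  moreover have "(49/100 * real n)^2 = 2401/10000 * (real n)^2" by (simp add: power2_eq_square)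
  moreover have "(real n)^2 \<ge> 0" by simp
  ultimately have SB: "2 * S \<le> B^2" using Sle by linarith
  have CS: "S^2 \<le> B * T" unfolding S_def B_def T_def by (rule cs_ineq) (auto simp: c0)
  have gt0: "usd_gamma_tilde n k opn = S / B^2"
    using B2 by (simp add: gt_eq[OF n0] GT_def B_def S_def c_def)
  define g0 where "g0 = S / B^2"
  have GTc: "GT k c = g0" using B2 by (simp add: GT_def B_def S_def g0_def)
  define \<Psi> where "\<Psi> a b = GT k (\<lambda>i. c i - (if a = Some i then 1 else 0)
            + (if usd_update a b = Some i then 1 else 0))" for a b
  define M where "M i = (S - 2 * c i + 1) / (B - 1)^2" for i
  have psiNN: "\<Psi> None None = g0" using GTc by (simp add: \<Psi>_def usd_update_def)
  have psiSN: "\<Psi> (Some i) None = g0" for i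
  proof -
    have "(\<lambda>l. c l - (if Some i = Some l then 1 else 0) + (if Some i = Some l then 1 else 0)) = c"
      by auto
    then show ?thesis using GTc by (simp add: \<Psi>_def usd_update_def)
  qed
  have psiNS: "\<Psi> None (Some j) = (S + 2 * c j + 1) / (B + 1)^2" if "j \<in> {1..k}" for j
    using GT_plus[OF that, of c] B2 by (simp add: \<Psi>_def usd_update_def B_def S_def)
  have psiSS: "\<Psi> (Some i) (Some j) = (if i = j then g0 else M i)" if "i \<in> {1..k}" for i j
  proof (cases "i = j")
    case True
    have "(\<lambda>l. c l - (if Some i = Some l then 1 else 0) + (if Some i = Some l then 1 else 0)) = c"
      by auto
    then show ?thesis using GTc True by (simp add: \<Psi>_def usd_update_def)
  next
    case False
    have "(\<lambda>l. c l - (if Some i = Some l then 1 else 0) + (if (None::nat option) = Some l then 1 else 0))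
       = (\<lambda>l. c l - (if i = l then 1 else 0))" by auto
    then show ?thesis using False GT_minus[OF that, of c] B2
      by (simp add: \<Psi>_def usd_update_def B_def S_def M_def)
  qed
  have E: "measure_pmf.expectation (usd_next n opn) (usd_gamma_tilde n k)
      = (\<Sum>u<n. \<Sum>v<n. \<Psi> (opn u) (opn v)) / (real n)^2"
    unfolding expect_eq[OF n0] \<Psi>_def c_def ..
  have inner: "(\<Sum>v<n. \<Psi> a (opn v)) = N * \<Psi> a None + (\<Sum>j\<in>{1..k}. c j * \<Psi> a (Some j))" for a
    using group_sum[OF vc, of "\<Psi> a"] by (simp add: N_def c_def)
  have outer: "(\<Sum>u<n. \<Sum>v<n. \<Psi> (opn u) (opn v))
     = N * (N * \<Psi> None None + (\<Sum>j\<in>{1..k}. c j * \<Psi> None (Some j)))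
       + (\<Sum>i\<in>{1..k}. c i * (N * \<Psi> (Some i) None + (\<Sum>j\<in>{1..k}. c j * \<Psi> (Some i) (Some j))))"
    unfolding inner using group_sum[OF vc, of "\<lambda>a. N * \<Psi> a None + (\<Sum>j\<in>{1..k}. c j * \<Psi> a (Some j))"]
    by (simp add: N_def c_def)
  define P where "P = (B*S + 2*S + B) / (B+1)^2"
  define X where "X = (B^2 - S)*(S+1) - 2*B*S + 2*T"
  have sumP: "(\<Sum>j\<in>{1..k}. c j * \<Psi> None (Some j)) = P"
  proof -
    have "(\<Sum>j\<in>{1..k}. c j * \<Psi> None (Some j)) = (\<Sum>j\<in>{1..k}. (S * c j + 2 * (c j)^2 + c j) / (B+1)^2)"
      by (intro sum.cong refl) (simp add: psiNS power2_eq_square algebra_simps add_divide_distrib)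
    also have "\<dots> = (\<Sum>j\<in>{1..k}. S * c j + 2 * (c j)^2 + c j) / (B+1)^2"
      by (simp add: sum_divide_distrib)
    also have "(\<Sum>j\<in>{1..k}. S * c j + 2 * (c j)^2 + c j) = S * B + 2 * S + B"
      by (simp only: sum.distrib sum_distrib_left[symmetric] B_def[symmetric] S_def[symmetric])
    also have "(S * B + 2 * S + B) / (B+1)^2 = (B*S + 2*S + B) / (B+1)^2" by (simp add: algebra_simps)
    finally show ?thesis by (simp add: P_def)
  qed
  have sumSS: "(\<Sum>j\<in>{1..k}. c j * \<Psi> (Some i) (Some j)) = c i * g0 + (B - c i) * M i"
    if "i \<in> {1..k}" for i
  proof -
    have "(\<Sum>j\<in>{1..k}. c j * \<Psi> (Some i) (Some j))
       = (\<Sum>j\<in>{1..k}. c j * M i + (if i = j then c j * (g0 - M i) else 0))"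
      by (intro sum.cong refl) (auto simp: psiSS[OF that] algebra_simps)
    also have "\<dots> = B * M i + c i * (g0 - M i)"
      using that by (simp add: sum.distrib B_def sum_distrib_right)
    finally show ?thesis by (simp add: algebra_simps)
  qed
  have sumX: "(\<Sum>i\<in>{1..k}. c i * (B - c i) * M i) = X / (B-1)^2"
  proof -
    have "(\<Sum>i\<in>{1..k}. c i * (B - c i) * M i)
      = (\<Sum>i\<in>{1..k}. ((B*S + B) * c i - (S + 1 + 2*B) * (c i)^2 + 2 * (c i)^3) / (B-1)^2)"
      by (intro sum.cong refl) (simp add: M_def power2_eq_square power3_eq_cube algebra_simps
          diff_divide_distrib add_divide_distrib)
    also have "\<dots> = (\<Sum>i\<in>{1..k}. (B*S + B) * c i - (S + 1 + 2*B) * (c i)^2 + 2 * (c i)^3) / (B-1)^2"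
      by (simp add: sum_divide_distrib)
    also have "(\<Sum>i\<in>{1..k}. (B*S + B) * c i - (S + 1 + 2*B) * (c i)^2 + 2 * (c i)^3)
        = (B*S + B) * B - (S + 1 + 2*B) * S + 2 * T"
      by (simp only: sum.distrib sum_subtractf sum_distrib_left[symmetric] B_def[symmetric] S_def[symmetric] T_def[symmetric])
    also have "((B*S + B) * B - (S + 1 + 2*B) * S + 2 * T) / (B-1)^2 = X / (B-1)^2"
      by (simp add: X_def power2_eq_square algebra_simps)
    finally show ?thesis .
  qed
  have sumI: "(\<Sum>i\<in>{1..k}. c i * (N * \<Psi> (Some i) None + (\<Sum>j\<in>{1..k}. c j * \<Psi> (Some i) (Some j))))
      = N*B*g0 + S*g0 + X/(B-1)^2"
  proof -
    have "(\<Sum>i\<in>{1..k}. c i * (N * \<Psi> (Some i) None + (\<Sum>j\<in>{1..k}. c j * \<Psi> (Some i) (Some j))))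
       = (\<Sum>i\<in>{1..k}. N * g0 * c i + g0 * (c i)^2 + c i * (B - c i) * M i)"
    proof (intro sum.cong refl)
      fix i assume i: "i \<in> {1..k}"
      show "c i * (N * \<Psi> (Some i) None + (\<Sum>j\<in>{1..k}. c j * \<Psi> (Some i) (Some j)))
         = N * g0 * c i + g0 * (c i)^2 + c i * (B - c i) * M i"
        unfolding sumSS[OF i] psiSN by (simp add: power2_eq_square algebra_simps)
    qed
    also have "\<dots> = N * g0 * B + g0 * S + X/(B-1)^2"
      by (simp only: sum.distrib sum_distrib_left[symmetric] B_def[symmetric] S_def[symmetric] sumX)
    finally show ?thesis by (simp add: algebra_simps)
  qed
  have tot: "(\<Sum>u<n. \<Sum>v<n. \<Psi> (opn u) (opn v)) = N*(N*g0 + P) + (N*B*g0 + S*g0 + X/(B-1)^2)"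
    unfolding outer psiNN sumP sumI ..
  have key: "N*(N*g0 + P) + (N*B*g0 + S*g0 + X/(B-1)^2) \<ge> (real n)^2 * g0 + 1/4"
    by (rule final_ineq[where T=T]) (use NB N0 B2 S0 SB CS in \<open>auto simp: g0_def P_def X_def\<close>)
  have "measure_pmf.expectation (usd_next n opn) (usd_gamma_tilde n k)
      \<ge> ((real n)^2 * g0 + 1/4) / (real n)^2"
    unfolding E tot using key n0 by (intro divide_right_mono) auto
  also have "((real n)^2 * g0 + 1/4) / (real n)^2 = g0 + 1 / (4 * (real n)^2)"
    using n0 by (simp add: field_simps)
  finally have "measure_pmf.expectation (usd_next n opn) (usd_gamma_tilde n k) \<ge> g0 + 1 / (4 * (real n)^2)" .
  moreover have "1 / (12 * (real n)^2) \<le> 1 / (4 * (real n)^2)"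
    using n0 by (intro divide_left_mono) auto
  ultimately show "measure_pmf.expectation (usd_next n opn) (usd_gamma_tilde n k)
          \<ge> usd_gamma_tilde n k opn + 1 / (12 * (real n)\<^sup>2)"
    using gt0 g0_def by linarith
qed

end
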